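(* Let $T\in\mathbb{N}$, $\alpha\in(0,1)$, $\delta\in(0,1)$, $\lambda=\sqrt T$, and let $\mathcal{H}=\{k/(H-1):k=0,\dots,H-1\}$ with $H\ge2$. Run the ExAUL algorithm (described in the context) with $\eta=2\gamma=\sqrt{\ln|\mathcal{H}|/T}$ against an adaptive adversary. Then, with probability at least $1-\delta$ over the learner's randomization, $$\frac1T\mathcal{R}_T^{\mathrm{FDR}}\le\frac{1-\mathrm{Ineff}_T}{\sqrt T}+\Big(1+\frac1{\sqrt T}\Big)\Big(4\sqrt{\frac{\ln|\mathcal{H}|}{T}}+\Big(\frac1T+\sqrt{\frac{1}{T\ln|\mathcal{H}|}}\Big)\ln\frac2\delta\Big).$$
   Context: Protocol. For $t=1,\dots,T$: an adaptive adversary chooses an input $\mathbf{x}_t$ (determining a score $f_t=f(\mathbf{x}_t,G(\mathbf{x}_t))\in[0,1)$ for a fixed generator $G$ and fixed scoring function $f$) and a feedback value $c_t\in[0,1]$ for the answer $G(\mathbf{x}_t)$; these may depend on the learner's past choices $\tau_1,\dots,\tau_{t-1}$ but not on $\tau_t$. The learner picks $\tau_t\in\mathcal{H}$; it answers $G(\mathbf{x}_t)$ if $f_t\ge\tau_t$ and outputs IDK otherwise; it observes $f_t$ and, as partial feedback, $e_t$, which equals $c_t$ when it answers (when it abstains, the losses below do not depend on $c_t$). Losses: for $\tau\in\mathcal{H}$, $a_t(\tau)=\mathbf{1}(f_t<\tau)$, $d_t(\tau,\alpha)=\mathbf{1}(f_t\ge\tau)c_t-\alpha\mathbf{1}(f_t\ge\tau)+\alpha$,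 $\ell_t(\tau)=\frac{a_t(\tau)+\lambda d_t(\tau,\alpha)}{1+\lambda}\in[0,1]$. ExAUL algorithm (parameters $\eta,\gamma>0$): $w_1(\tau)=1/|\mathcal{H}|$. At round $t$: $p_t(\tau)=w_t(\tau)/\sum_{\tau'}w_t(\tau')$; draw $\tau_t\sim p_t$; observe $f_t$ and $e_t$; define the unlocked set $\mathcal{H}_t(\tau')=\{\tau\in\mathcal{H}:\tau\le f_t\}$ if $f_t\ge\tau'$ and $\mathcal{H}_t(\tau')=\{\tau\in\mathcal{H}:\tau>f_t\}$ otherwise (for $\tau\in\mathcal{H}_t(\tau_t)$ the loss $\ell_t(\tau)$ is computable from $e_t$); set for all $\tau\in\mathcal{H}$ $$\tilde\ell_t(\tau)=\frac{\ell_t(\tau)\,\mathbf{1}(\tau\in\mathcal{H}_t(\tau_t))}{\gamma+\sum_{\bar\tau\in\mathcal{H}_t(\tau_t)}\mathbf{1}(\tau\in\mathcal{H}_t(\bar\tau))\,p_t(\bar\tau)};$$ update $w_{t+1}(\tau)\propto\exp(-\eta\sum_{s=1}^t\tilde\ell_s(\tau))$. Metrics: $\mathcal{R}_T^{\mathrm{FDR}}=\sum_{t=1}^T[\mathbf{1}(f_t\ge\tau_t)c_t-\alpha\mathbf{1}(f_t\ge\tau_t)]$ and $\mathrm{Ineff}_T=\frac1T\sum_{t=1}^T\mathbf{1}(f_t<\tau_t)$. *)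

theory Defs
  imports Complex_Main
begin

text \<open>Threshold grid: index k < N stands for the threshold k/(N-1);
  the grid is H = {k/(N-1) : k = 0..N-1}, |H| = N.\<close>
definition grid :: "nat \<Rightarrow> nat \<Rightarrow> real" where
  "grid N k = real k / real (N - 1)"

definition abst_loss :: "real \<Rightarrow> real \<Rightarrow> real" where
  "abst_loss f tau = (if f < tau then 1 else 0)"

definition fdr_loss :: "real \<Rightarrow> real \<Rightarrow> real \<Rightarrow> real \<Rightarrow> real" where
  "fdr_loss alpha f c tau =
     (if f \<ge> tau then 1 else 0) * c - alpha * (if f \<ge> tau then 1 else 0) + alpha"

definition tot_loss :: "real \<Rightarrow> real \<Rightarrow> real \<Rightarrow> real \<Rightarrow> real \<Rightarrow> real" where
  "tot_loss lam alpha f c tau = (abst_loss f tau + lam * fdr_loss alpha f c tau) / (1 + lam)"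

definition unlocked :: "nat \<Rightarrow> real \<Rightarrow> nat \<Rightarrow> nat set" where
  "unlocked N f k' =
     (if f \<ge> grid N k' then {k. k < N \<and> grid N k \<le> f}
      else {k. k < N \<and> grid N k > f})"

definition est_loss ::
  "nat \<Rightarrow> real \<Rightarrow> real \<Rightarrow> real \<Rightarrow> (nat \<Rightarrow> real) \<Rightarrow> real \<Rightarrow> real \<Rightarrow> nat \<Rightarrow> nat \<Rightarrow> real" where
  "est_loss N lam alpha gam p f c kt k =
     tot_loss lam alpha f c (grid N k) * (if k \<in> unlocked N f kt then 1 else 0) /
     (gam + (\<Sum>kb\<in>unlocked N f kt. (if k \<in> unlocked N f kb then 1 else 0) * p kb))"

definition expw :: "nat \<Rightarrow> real \<Rightarrow> (nat \<Rightarrow> real) \<Rightarrow> nat \<Rightarrow> real" where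
  "expw N eta L k = exp (- eta * L k) / (\<Sum>j<N. exp (- eta * L j))"

text \<open>Cumulative estimated losses after a (reversed) history of drawn indices.
  The adversary adv maps the list of the learner's past thresholds
  [tau_1,...,tau_(t-1)] to the pair (f_t, c_t).\<close>
fun cumloss_rev ::
  "nat \<Rightarrow> real \<Rightarrow> real \<Rightarrow> real \<Rightarrow> real \<Rightarrow> (real list \<Rightarrow> real \<times> real) \<Rightarrow> nat list \<Rightarrow> nat \<Rightarrow> real" where
  "cumloss_rev N lam alpha eta gam adv [] = (\<lambda>k. 0)"
| "cumloss_rev N lam alpha eta gam adv (x # rh) =
     (let L = cumloss_rev N lam alpha eta gam adv rh;
          p = expw N eta L;
          fc = adv (map (grid N) (rev rh))
      in (\<lambda>k. L k + est_loss N lam alpha gam p (fst fc) (snd fc) x k))"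

definition exaul_p ::
  "nat \<Rightarrow> real \<Rightarrow> real \<Rightarrow> real \<Rightarrow> real \<Rightarrow> (real list \<Rightarrow> real \<times> real) \<Rightarrow> nat list \<Rightarrow> nat \<Rightarrow> real" where
  "exaul_p N lam alpha eta gam adv hs = expw N eta (cumloss_rev N lam alpha eta gam adv (rev hs))"

definition exaul_prob ::
  "nat \<Rightarrow> real \<Rightarrow> real \<Rightarrow> real \<Rightarrow> real \<Rightarrow> (real list \<Rightarrow> real \<times> real) \<Rightarrow> nat \<Rightarrow> (nat list \<Rightarrow> bool) \<Rightarrow> real" where
  "exaul_prob N lam alpha eta gam adv T E =
     (\<Sum>hs\<in>{hs. length hs = T \<and> set hs \<subseteq> {..<N}}.
        (\<Prod>t<T. exaul_p N lam alpha eta gam adv (take t hs) (hs ! t)) * (if E hs then 1 else 0))"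

definition fdr_regret :: "nat \<Rightarrow> real \<Rightarrow> (real list \<Rightarrow> real \<times> real) \<Rightarrow> nat list \<Rightarrow> real" where
  "fdr_regret N alpha adv hs =
     (\<Sum>t<length hs. let fc = adv (map (grid N) (take t hs)); ans = fst fc \<ge> grid N (hs ! t) in
        (if ans then 1 else 0) * snd fc - alpha * (if ans then 1 else 0))"

definition ineff :: "nat \<Rightarrow> (real list \<Rightarrow> real \<times> real) \<Rightarrow> nat list \<Rightarrow> real" where
  "ineff N adv hs =
     (\<Sum>t<length hs. if fst (adv (map (grid N) (take t hs))) < grid N (hs ! t) then 1 else 0)
     / real (length hs)"

end

theory Submission
  imports Defs
begin

lemma K1: fixes x :: real assumes "0 \<le> x" shows "2*x/(2+x) \<le> ln (1+x)"
proof -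
  have "(\<lambda>y. ln (1+y) - 2*y/(2+y)) 0 \<le> (\<lambda>y. ln (1+y) - 2*y/(2+y)) x"
  proof (rule DERIV_nonneg_imp_nondecreasing[OF assms])
    fix y :: real assume y: "0 \<le> y" "y \<le> x"
    have d: "((\<lambda>y. ln (1+y) - 2*y/(2+y)) has_real_derivative (1/(1+y) - 4/(2+y)^2)) (at y)"
      using y by (auto intro!: derivative_eq_intros simp: field_simps power2_eq_square)
    have e: "(2+y)^2 = 4*(1+y) + y^2" by (simp add: power2_eq_square algebra_simps)
    have "4/(2+y)^2 \<le> 4/(4*(1+y))"
      using y by (intro divide_left_mono) (auto simp: e intro!: mult_pos_pos add_pos_nonneg)
    moreover have "4/(4*(1+y)) = 1/(1+y)" using y by (simp add: field_simps)
    ultimately have "4/(2+y)^2 \<le> 1/(1+y)" by (rule ord_le_eq_trans)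
    then show "\<exists>d. ((\<lambda>y. ln (1+y) - 2*y/(2+y)) has_real_derivative d) (at y) \<and> d \<ge> 0"
      using d by (intro exI[of _ "1/(1+y) - 4/(2+y)^2"]) auto
  qed
  then show ?thesis by simp
qed
lemma K2: fixes z :: real assumes "0 \<le> z" shows "exp (-z) \<le> 1 - z + z^2/2"
proof -
  have "(\<lambda>y. 1 - y + y^2/2 - exp (-y)) 0 \<le> (\<lambda>y. 1 - y + y^2/2 - exp (-y)) z"
  proof (rule DERIV_nonneg_imp_nondecreasing[OF assms])
    fix y :: real assume y: "0 \<le> y" "y \<le> z"
    have d: "((\<lambda>y. 1 - y + y^2/2 - exp (-y)) has_real_derivative (-1 + y + exp (-y))) (at y)"
      by (auto intro!: derivative_eq_intros simp: field_simps power2_eq_square)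
    have "0 \<le> -1 + y + exp (-y)" using exp_minus_ge[of y] by simp
    then show "\<exists>d. ((\<lambda>y. 1 - y + y^2/2 - exp (-y)) has_real_derivative d) (at y) \<and> d \<ge> 0"
      using d by blast
  qed
  then show ?thesis by simp
qed
lemma K1e: fixes x :: real assumes "0 \<le> x" shows "exp (2*x/(2+x)) \<le> 1 + x"
  using K1[OF assms] assms by (metis exp_le_cancel_iff exp_ln add_pos_nonneg zero_less_one)

lemma NumA:
  fixes Q x gam :: real
  assumes "0 \<le> Q" "0 \<le> x" "x \<le> 2 * gam" "0 < gam"
  shows "Q * exp (x / (gam + Q)) \<le> Q + x"
proof (cases "Q = 0")
  case False
  then have Qp: "Q > 0" using assms by simp
  define y where "y = x / Q"
  have y0: "0 \<le> y" using assms Qp by (simp add: y_def)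
  have "2*y/(2+y) = 2*x/(2*Q + x)" using Qp by (simp add: y_def field_simps)
  moreover have "x/(gam+Q) \<le> 2*x/(2*Q + x)"
  proof -
    have "x * x \<le> x * (2*gam)" using assms by (intro mult_left_mono) auto
    then show ?thesis using assms Qp by (simp add: divide_simps) (simp add: algebra_simps)
  qed
  ultimately have "exp (x/(gam+Q)) \<le> 1 + y" using K1e[OF y0] by (metis exp_le_cancel_iff order_trans)
  then have "Q * exp (x/(gam+Q)) \<le> Q * (1 + y)" using Qp by simp
  then show ?thesis using Qp by (simp add: y_def algebra_simps)
qed (simp add: assms)

lemma NumB:
  fixes Q a gam :: real
  assumes "0 < Q" "Q \<le> 1" "0 \<le> a" "a \<le> 1" "0 < gam"
  shows "1 - Q + Q * exp (- (2*gam*a/(gam+Q))) \<le> exp (- (2*gam*a) + 2*gam*(2*gam*a/(gam+Q)))"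
proof -
  define z where "z = 2*gam*a/(gam+Q)"
  have z0: "0 \<le> z" using assms by (simp add: z_def)
  have "Q * exp (-z) \<le> Q * (1 - z + z^2/2)" using K2[OF z0] assms by simp
  moreover have "Q * z = 2*gam*a - gam * z" using assms by (simp add: z_def field_simps)
  moreover have "Q * z^2/2 \<le> gam * z"
  proof -
    have "Q * a \<le> gam + Q" using assms mult_left_le[of a Q] by linarith
    then have "Q * (2*gam*a) \<le> 2*gam*(gam+Q)" using assms
      by (metis mult.left_commute mult_le_cancel_left_pos zero_less_mult_iff zero_less_numeral)
    then have "Q * z \<le> 2*gam" using assms by (simp add: z_def divide_simps mult.commute)
    then have "Q * z * z \<le> 2 * gam * z" using z0 by (simp add: mult_right_mono)
    then show ?thesis by (simp add: power2_eq_square)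
  qed
  ultimately have "1 - Q + Q * exp (-z) \<le> 1 + (- (2*gam*a) + 2*gam*z)"
    by (simp add: algebra_simps)
  also have "\<dots> \<le> exp (- (2*gam*a) + 2*gam*z)" by (rule exp_ge_add_one_self)
  finally show ?thesis by (simp add: z_def)
qed


lemma unl_sub: "unlocked N f k \<subseteq> {..<N}"
  by (auto simp: unlocked_def)

lemma unl_fin: "finite (unlocked N f k)"
  by (rule finite_subset[OF unl_sub]) auto

lemma unl_self: "k < N \<Longrightarrow> k \<in> unlocked N f k"
  by (auto simp: unlocked_def)

lemma unl_same: "k' \<in> unlocked N f k \<Longrightarrow> unlocked N f k' = unlocked N f k"
  by (auto simp: unlocked_def split: if_splits)

lemma unl_sym: "k < N \<Longrightarrow> j < N \<Longrightarrow> (j \<in> unlocked N f k) = (k \<in> unlocked N f j)"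
  by (auto simp: unlocked_def)

lemma tl_same: "k' \<in> unlocked N f k \<Longrightarrow>
   tot_loss lam alpha f c (grid N k') = tot_loss lam alpha f c (grid N k)"
  by (auto simp: unlocked_def tot_loss_def abst_loss_def fdr_loss_def split: if_splits)

lemma tl_bounds:
  assumes "0 \<le> lam" "0 \<le> alpha" "alpha \<le> 1" "0 \<le> c" "c \<le> 1"
  shows "0 \<le> tot_loss lam alpha f c tau \<and> tot_loss lam alpha f c tau \<le> 1"
proof (cases "f \<ge> tau")
  case True
  then have "tot_loss lam alpha f c tau = lam * c / (1 + lam)"
    by (simp add: tot_loss_def abst_loss_def fdr_loss_def)
  moreover have "lam * c \<le> 1 + lam" using assms mult_left_le[of c lam] by linarith
  ultimately show ?thesis using assms by auto
next
  case False
  then have "tot_loss lam alpha f c tau = (1 + lam * alpha) / (1 + lam)"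
    by (simp add: tot_loss_def abst_loss_def fdr_loss_def)
  moreover have "lam * alpha \<le> lam" using assms mult_left_le[of alpha lam] by linarith
  ultimately show ?thesis using assms by auto
qed

lemma est_simp:
  assumes "kt < N"
  shows "est_loss N lam alpha gam p f c kt k =
    tot_loss lam alpha f c (grid N k) * (if k \<in> unlocked N f kt then 1 else 0) /
    (gam + (\<Sum>kb\<in>unlocked N f kt. p kb))"
proof (cases "k \<in> unlocked N f kt")
  case True
  have "(\<Sum>kb\<in>unlocked N f kt. (if k \<in> unlocked N f kb then 1 else 0) * p kb)
      = (\<Sum>kb\<in>unlocked N f kt. p kb)"
    by (rule sum.cong) (use True unl_same in auto)
  then show ?thesis by (simp add: est_loss_def)
qed (simp add: est_loss_def)

lemma split_sum:
  fixes p :: "nat \<Rightarrow> real"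
  assumes "U \<subseteq> {..<N}"
  shows "(\<Sum>i<N. p i * (if i \<in> U then a else b)) = a * (\<Sum>i\<in>U. p i) + b * ((\<Sum>i<N. p i) - (\<Sum>i\<in>U. p i))"
proof -
  have fin: "finite U" using assms finite_subset by blast
  have "(\<Sum>i<N. p i * (if i \<in> U then a else b)) = (\<Sum>i\<in>U. p i * a) + (\<Sum>i\<in>{..<N} - U. p i * b)"
    using sum.subset_diff[OF assms, of "\<lambda>i. p i * (if i \<in> U then a else b)"] 
    by (simp add: Int_absorb1 assms)
  also have "(\<Sum>i\<in>{..<N} - U. p i * b) = b * ((\<Sum>i<N. p i) - (\<Sum>i\<in>U. p i))"
  proof -
    have "(\<Sum>i\<in>{..<N} - U. p i * b) = (\<Sum>i\<in>{..<N} - U. p i) * b" by (rule sum_distrib_right[symmetric])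
    then show ?thesis using sum_diff[OF _ assms, of p] by simp
  qed
  moreover have "(\<Sum>i\<in>U. p i * a) = a * (\<Sum>i\<in>U. p i)"
    by (simp add: sum_distrib_left mult.commute)
  ultimately show ?thesis by simp
qed


lemma expw_pos: "N \<ge> 1 \<Longrightarrow> 0 < expw N eta L k"
proof -
  assume N: "N \<ge> 1"
  have "0 < (\<Sum>j<N. exp (- eta * L j))" using N by (intro sum_pos) (auto simp: lessThan_empty_iff)
  then show ?thesis by (simp add: expw_def)
qed

lemma expw_sum: "N \<ge> 1 \<Longrightarrow> (\<Sum>k<N. expw N eta L k) = 1"
proof -
  assume N: "N \<ge> 1"
  have "0 < (\<Sum>j<N. exp (- eta * L j))" using N by (intro sum_pos) (auto simp: lessThan_empty_iff)
  then show ?thesis by (simp add: expw_def sum_divide_distrib[symmetric])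
qed

locale rnd =
  fixes N :: nat and p :: "nat \<Rightarrow> real" and f c lam alpha gam :: real
  assumes Nge1: "N \<ge> 1" and ppos: "\<And>k. k < N \<Longrightarrow> 0 < p k" and psum: "(\<Sum>k<N. p k) = 1"
    and f0: "0 \<le> f" and f1: "f < 1" and c0: "0 \<le> c" and c1: "c \<le> 1"
    and lam0: "0 \<le> lam" and a0: "0 \<le> alpha" and a1: "alpha \<le> 1" and g0: "0 < gam"
begin

definition PU where "PU k = (\<Sum>kb\<in>unlocked N f k. p kb)"
definition ell where "ell k = tot_loss lam alpha f c (grid N k)"

lemma ell_b: "0 \<le> ell k" "ell k \<le> 1"
  using tl_bounds[OF lam0 a0 a1 c0 c1] by (auto simp: ell_def)

lemma PU_b: assumes "k < N" shows "0 < PU k" "PU k \<le> 1"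
proof -
  have "p k \<le> PU k" unfolding PU_def
    using ppos unl_sub[of N f k] unl_self[OF assms] unl_fin[of N f k]
    by (intro member_le_sum) (auto intro: less_imp_le)
  then show "0 < PU k" using ppos[OF assms] by linarith
  have "PU k \<le> (\<Sum>k<N. p k)" unfolding PU_def
    using ppos unl_sub[of N f k] by (intro sum_mono2) (auto intro: less_imp_le)
  then show "PU k \<le> 1" using psum by simp
qed

lemma est_eq: "kt < N \<Longrightarrow> est_loss N lam alpha gam p f c kt i =
   (if i \<in> unlocked N f kt then ell kt / (gam + PU kt) else 0)"
  using tl_same[of i N f kt lam alpha c] by (simp add: est_simp PU_def ell_def)

lemma R1: assumes j: "j < N"
  shows "(\<Sum>k<N. p k * exp (2*gam*(est_loss N lam alpha gam p f c k j - ell j))) \<le> 1"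
proof -
  let ?Q = "PU j" and ?x = "2*gam*ell j"
  have "(\<Sum>k<N. p k * exp (2*gam*(est_loss N lam alpha gam p f c k j - ell j)))
    = (\<Sum>k<N. p k * (if k \<in> unlocked N f j then exp (?x/(gam+?Q)) * exp (-?x) else exp (-?x)))"
  proof (rule sum.cong)
    fix k assume k: "k \<in> {..<N}"
    show "p k * exp (2*gam*(est_loss N lam alpha gam p f c k j - ell j)) =
      p k * (if k \<in> unlocked N f j then exp (?x/(gam+?Q)) * exp (-?x) else exp (-?x))"
    proof (cases "k \<in> unlocked N f j")
      case True
      then have "j \<in> unlocked N f k" "PU k = PU j" "ell k = ell j"
        using unl_sym[of k N j f] k j unl_same[OF True] tl_same[OF True, of lam alpha c]
        by (auto simp: PU_def ell_def)
      then show ?thesis using k True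
        by (simp add: est_eq right_diff_distrib exp_diff exp_minus divide_inverse)
    next
      case False
      then have "j \<notin> unlocked N f k" using unl_sym[of k N j f] k j by auto
      then show ?thesis using k False by (simp add: est_eq)
    qed
  qed simp
  also have "\<dots> = exp (?x/(gam+?Q)) * exp (-?x) * ?Q + exp (-?x) * (1 - ?Q)"
    by (subst split_sum[OF unl_sub]) (simp add: psum PU_def)
  also have "\<dots> = exp (-?x) * (?Q * exp (?x/(gam+?Q)) + (1 - ?Q))" by (simp add: algebra_simps)
  also have "\<dots> \<le> exp (-?x) * (?Q + ?x + (1 - ?Q))"
  proof -
    have "?Q * exp (?x/(gam+?Q)) \<le> ?Q + ?x"
      using PU_b[OF j] ell_b[of j] g0 by (intro NumA) (auto intro: mult_left_le)
    then show ?thesis by (intro mult_left_mono) auto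
  qed
  also have "\<dots> = exp (-?x) * (1 + ?x)" by simp
  also have "\<dots> \<le> exp (-?x) * exp ?x" by (intro mult_left_mono) auto
  also have "\<dots> = 1" by (simp add: mult_exp_exp)
  finally show ?thesis .
qed


lemma R2:
  shows "(\<Sum>k<N. p k * exp (2*gam*ell k/(gam + PU k) - 4*gam)) \<le> 1"
proof -
  define A where "A = {k. k < N \<and> grid N k \<le> f}"
  define B where "B = {k. k < N \<and> grid N k > f}"
  define eA where "eA = lam*c/(1+lam)"
  define eB where "eB = (1+lam*alpha)/(1+lam)"
  define PA where "PA = (\<Sum>k\<in>A. p k)"
  define PB where "PB = (\<Sum>k\<in>B. p k)"
  have AB: "A \<subseteq> {..<N}" "B = {..<N} - A" by (auto simp: A_def B_def)
  have PB: "PB = 1 - PA" unfolding PB_def PA_def AB(2) using sum_diff[OF _ AB(1), of p] psum by simp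
  have PA0: "0 \<le> PA" unfolding PA_def using AB(1) ppos by (intro sum_nonneg) (auto intro: less_imp_le)
  have PB0: "0 \<le> PB" unfolding PB_def using ppos by (intro sum_nonneg) (auto simp: B_def intro: less_imp_le)
  have eAb: "0 \<le> eA" "eA \<le> 1"
    using tl_bounds[OF lam0 a0 a1 c0 c1, of f 0] f0 by (auto simp: eA_def tot_loss_def abst_loss_def fdr_loss_def)
  have eBb: "0 \<le> eB" "eB \<le> 1"
    using tl_bounds[OF lam0 a0 a1 c0 c1, of f 2] f1 by (auto simp: eB_def tot_loss_def abst_loss_def fdr_loss_def)
  let ?XA = "exp (2*gam*eA/(gam + PA) - 4*gam)" and ?XB = "exp (2*gam*eB/(gam + PB) - 4*gam)"
  have "(\<Sum>k<N. p k * exp (2*gam*ell k/(gam + PU k) - 4*gam)) = (\<Sum>k<N. p k * (if k \<in> A then ?XA else ?XB))"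
  proof (rule sum.cong)
    fix k assume k: "k \<in> {..<N}"
    show "p k * exp (2*gam*ell k/(gam + PU k) - 4*gam) = p k * (if k \<in> A then ?XA else ?XB)"
    proof (cases "k \<in> A")
      case True
      then have "unlocked N f k = A" "ell k = eA"
        by (auto simp: unlocked_def A_def ell_def eA_def tot_loss_def abst_loss_def fdr_loss_def)
      then show ?thesis using True by (simp add: PU_def PA_def)
    next
      case False
      then have "unlocked N f k = B" "ell k = eB" using k
        by (auto simp: unlocked_def A_def B_def ell_def eB_def tot_loss_def abst_loss_def fdr_loss_def)
      then show ?thesis using False by (simp add: PU_def PB_def)
    qed
  qed simp
  also have "\<dots> = ?XA * PA + ?XB * (1 - PA)"
    by (subst split_sum[OF AB(1)]) (simp add: psum PA_def)
  also have "\<dots> = exp (- (4*gam)) * (PA * exp (2*gam*eA/(gam + PA)) + PB * exp (2*gam*eB/(gam + PB)))"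
    by (simp add: PB exp_diff exp_minus divide_inverse algebra_simps)
  also have "\<dots> \<le> exp (- (4*gam)) * ((PA + 2*gam*eA) + (PB + 2*gam*eB))"
  proof -
    have "PA * exp (2*gam*eA/(gam + PA)) \<le> PA + 2*gam*eA"
      using PA0 eAb g0 by (intro NumA) (auto intro: mult_left_le)
    moreover have "PB * exp (2*gam*eB/(gam + PB)) \<le> PB + 2*gam*eB"
      using PB0 eBb g0 by (intro NumA) (auto intro: mult_left_le)
    ultimately show ?thesis by (intro mult_left_mono) auto
  qed
  also have "\<dots> \<le> exp (- (4*gam)) * (1 + 4*gam)"
  proof -
    have "2*gam*eA \<le> 2*gam" "2*gam*eB \<le> 2*gam" using eAb eBb g0 by (auto intro: mult_left_le)
    then show ?thesis using PB by (intro mult_left_mono) auto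
  qed
  also have "\<dots> \<le> exp (- (4*gam)) * exp (4*gam)" by (intro mult_left_mono) auto
  also have "\<dots> = 1" by (simp add: mult_exp_exp)
  finally show ?thesis .
qed

lemma R0:
  assumes pL: "p = expw N eta L" and eta: "eta = 2*gam" and kt: "kt < N"
  shows "ln (\<Sum>i<N. exp (- eta * (L i + est_loss N lam alpha gam p f c kt i)))
     \<le> ln (\<Sum>i<N. exp (- eta * L i)) - eta * ell kt + eta * (2*gam*ell kt/(gam + PU kt))"
proof -
  define W where "W = (\<Sum>i<N. exp (- eta * L i))"
  have W0: "0 < W" unfolding W_def using Nge1 by (intro sum_pos) (auto simp: lessThan_empty_iff)
  let ?Q = "PU kt" and ?a = "ell kt"
  let ?E = "exp (- (2*gam*?a/(gam+?Q)))"
  have "(\<Sum>i<N. exp (- eta * (L i + est_loss N lam alpha gam p f c kt i)))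
      = W * (\<Sum>i<N. p i * (if i \<in> unlocked N f kt then ?E else 1))"
    unfolding sum_distrib_left
  proof (rule sum.cong)
    fix i assume i: "i \<in> {..<N}"
    have pi: "p i = exp (- eta * L i) / W" by (simp add: pL expw_def W_def)
    show "exp (- eta * (L i + est_loss N lam alpha gam p f c kt i)) =
       W * (p i * (if i \<in> unlocked N f kt then ?E else 1))"
    proof (cases "i \<in> unlocked N f kt")
      case True
      have "- eta * (L i + est_loss N lam alpha gam p f c kt i) = - eta * L i + (- (2*gam*?a/(gam+?Q)))"
        using True by (simp add: est_eq[OF kt] eta algebra_simps)
      then have "exp (- eta * (L i + est_loss N lam alpha gam p f c kt i)) = exp (- eta * L i) * ?E"
        by (simp only: exp_add)
      then show ?thesis using True W0 by (simp add: pi)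
    next
      case False
      then show ?thesis using W0 by (simp add: pi est_eq[OF kt])
    qed
  qed simp
  also have "\<dots> = W * (1 - ?Q + ?Q * ?E)"
    by (subst split_sum[OF unl_sub]) (simp add: psum PU_def algebra_simps)
  finally have eq: "(\<Sum>i<N. exp (- eta * (L i + est_loss N lam alpha gam p f c kt i))) = W * (1 - ?Q + ?Q * ?E)" .
  have X0: "0 < 1 - ?Q + ?Q * ?E" using PU_b[OF kt] by (smt (verit) exp_gt_zero mult_pos_pos)
  have "ln (1 - ?Q + ?Q * ?E) \<le> - (2*gam*?a) + 2*gam*(2*gam*?a/(gam+?Q))"
    using NumB[of ?Q ?a gam] PU_b[OF kt] ell_b[of kt] g0 X0
    by (metis exp_le_cancel_iff exp_ln)
  then show ?thesis unfolding eq using W0 X0 by (simp add: ln_mult W_def eta)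
qed

lemmas R0x = R0[unfolded ell_def PU_def]
lemmas R1x = R1[unfolded ell_def]
lemmas R2x = R2[unfolded ell_def PU_def]
end

fun Ex :: "nat \<Rightarrow> (nat list \<Rightarrow> nat \<Rightarrow> real) \<Rightarrow> nat \<Rightarrow> nat list \<Rightarrow> (nat list \<Rightarrow> real) \<Rightarrow> real" where
  "Ex N P 0 h F = F h"
| "Ex N P (Suc n) h F = (\<Sum>k<N. P h k * Ex N P n (h @ [k]) F)"

lemma lists_Suc_eq:
  "{ys. length ys = Suc n \<and> set ys \<subseteq> A} = (\<lambda>(k,ys). k # ys) ` (A \<times> {ys. length ys = n \<and> set ys \<subseteq> A})"
  by (auto simp: length_Suc_conv image_iff)

lemma Ex_eq:
  "(\<Sum>ys\<in>{ys. length ys = n \<and> set ys \<subseteq> {..<N}}. (\<Prod>t<n. P (h @ take t ys) (ys ! t)) * F (h @ ys))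
    = Ex N P n h F"
proof (induction n arbitrary: h)
  case 0
  have "{ys. length ys = 0 \<and> set ys \<subseteq> {..<N}} = {[]}" by auto
  then show ?case by simp
next
  case (Suc n)
  have inj: "inj_on (\<lambda>(k,ys). k # ys) ({..<N} \<times> {ys. length ys = n \<and> set ys \<subseteq> {..<N}})"
    by (auto simp: inj_on_def)
  have fin: "finite {ys. length ys = n \<and> set ys \<subseteq> {..<N::nat}}"
    using finite_lists_length_eq[of "{..<N}" n] by (simp add: conj_commute)
  have "(\<Sum>ys\<in>{ys. length ys = Suc n \<and> set ys \<subseteq> {..<N}}. (\<Prod>t<Suc n. P (h @ take t ys) (ys ! t)) * F (h @ ys))
     = (\<Sum>(k,ys)\<in>{..<N} \<times> {ys. length ys = n \<and> set ys \<subseteq> {..<N}}.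
          (\<Prod>t<Suc n. P (h @ take t (k#ys)) ((k#ys) ! t)) * F (h @ (k#ys)))"
    unfolding lists_Suc_eq by (subst sum.reindex[OF inj]) (simp add: case_prod_unfold)
  also have "\<dots> = (\<Sum>k<N. \<Sum>ys\<in>{ys. length ys = n \<and> set ys \<subseteq> {..<N}}.
          (\<Prod>t<Suc n. P (h @ take t (k#ys)) ((k#ys) ! t)) * F (h @ (k#ys)))"
    by (rule sum.cartesian_product[symmetric])
  also have "\<dots> = (\<Sum>k<N. P h k * (\<Sum>ys\<in>{ys. length ys = n \<and> set ys \<subseteq> {..<N}}.
          (\<Prod>t<n. P ((h @ [k]) @ take t ys) (ys ! t)) * F ((h @ [k]) @ ys)))"
    by (simp only: prod.lessThan_Suc_shift) (simp add: sum_distrib_left mult.assoc)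
  also have "\<dots> = Ex N P (Suc n) h F" by (simp only: Suc.IH Ex.simps)
  finally show ?case .
qed

locale pm =
  fixes N :: nat and P :: "nat list \<Rightarrow> nat \<Rightarrow> real"
  assumes P_nonneg: "\<And>h k. k < N \<Longrightarrow> 0 \<le> P h k"
    and P_sum: "\<And>h. (\<Sum>k<N. P h k) = 1"
begin

lemma Ex_const: "Ex N P n h (\<lambda>_. c) = c"
  by (induction n arbitrary: h) (simp_all add: sum_distrib_right[symmetric] P_sum)

lemma Ex_diff: "Ex N P n h (\<lambda>x. F x - G x) = Ex N P n h F - Ex N P n h G"
  by (induction n arbitrary: h) (simp_all add: right_diff_distrib sum_subtractf)

lemma Ex_scale: "Ex N P n h (\<lambda>x. c * F x) = c * Ex N P n h F"
  by (induction n arbitrary: h) (simp_all add: sum_distrib_left algebra_simps)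

lemma Ex_mono:
  assumes "\<And>hs. set hs \<subseteq> {..<N} \<Longrightarrow> length hs = length h + n \<Longrightarrow> F hs \<le> G hs" "set h \<subseteq> {..<N}"
  shows "Ex N P n h F \<le> Ex N P n h G"
  using assms
proof (induction n arbitrary: h)
  case 0
  then show ?case by simp
next
  case (Suc n)
  have "Ex N P n (h @ [k]) F \<le> Ex N P n (h @ [k]) G" if k: "k < N" for k
    by (rule Suc.IH) (use Suc.prems k in auto)
  then show ?case
    by (auto intro!: sum_mono mult_left_mono P_nonneg)
qed

lemma Ex_supermart:
  assumes "\<And>h. set h \<subseteq> {..<N} \<Longrightarrow> (\<Sum>k<N. P h k * exp (S (h @ [k]) - S h)) \<le> 1"
    "set h \<subseteq> {..<N}"
  shows "Ex N P n h (\<lambda>hs. exp (S hs)) \<le> exp (S h)"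
  using assms(2)
proof (induction n arbitrary: h)
  case 0
  then show ?case by simp
next
  case (Suc n)
  have "Ex N P (Suc n) h (\<lambda>hs. exp (S hs)) \<le> (\<Sum>k<N. P h k * exp (S (h @ [k])))"
    using Suc by (auto intro!: sum_mono mult_left_mono P_nonneg)
  also have "\<dots> = exp (S h) * (\<Sum>k<N. P h k * exp (S (h @ [k]) - S h))"
    by (simp add: sum_distrib_left exp_diff field_simps)
  also have "\<dots> \<le> exp (S h)"
    using assms(1)[OF Suc.prems] by simp
  finally show ?case .
qed

lemma Ex_markov:
  assumes "\<And>h. set h \<subseteq> {..<N} \<Longrightarrow> (\<Sum>k<N. P h k * exp (S (h @ [k]) - S h)) \<le> 1"
    and "S [] = 0"
  shows "Ex N P n [] (\<lambda>hs. if S hs > c then 1 else 0) \<le> exp (- c)"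
proof -
  have "Ex N P n [] (\<lambda>hs. if S hs > c then 1 else 0) \<le> Ex N P n [] (\<lambda>hs. exp (- c) * exp (S hs))"
  proof (rule Ex_mono)
    fix hs show "(if S hs > c then 1 else 0) \<le> exp (- c) * exp (S hs)"
    proof (cases "S hs > c")
      case True
      have "exp (- c) * exp (S hs) = exp (S hs - c)" by (simp add: exp_diff exp_minus field_simps)
      also have "\<dots> \<ge> 1" using True by simp
      finally show ?thesis using True by simp
    qed simp
  qed simp
  also have "\<dots> = exp (- c) * Ex N P n [] (\<lambda>hs. exp (S hs))"
    by (rule Ex_scale)
  also have "\<dots> \<le> exp (- c) * exp (S [])"
    by (intro mult_left_mono Ex_supermart assms) auto
  finally show ?thesis using assms(2) by simp
qed
end

definition psum :: "(nat list \<Rightarrow> nat \<Rightarrow> real) \<Rightarrow> nat list \<Rightarrow> real" where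
  "psum g hs = (\<Sum>t<length hs. g (take t hs) (hs ! t))"

lemma psum_Nil[simp]: "psum g [] = 0" by (simp add: psum_def)

lemma psum_snoc: "psum g (h @ [k]) = psum g h + g h k"
proof -
  have "(\<Sum>t<length h. g (take t (h @ [k])) ((h @ [k]) ! t)) = (\<Sum>t<length h. g (take t h) (h ! t))"
    by (rule sum.cong) (auto simp: nth_append)
  then show ?thesis by (simp add: psum_def)
qed

lemma final_alg:
  fixes T lam eta s c0 R cnt PL PLj PE PG lnN alpha :: real
  assumes T: "T > 0" and lam: "lam > 0" and eta: "eta > 0" and s: "eta*T*s = 1"
    and lnN: "lnN = eta^2*T" and c0: "c0 \<ge> 0"
    and e1: "(1+lam)*PL = cnt + lam*R + lam*alpha*T"
    and a: "PL \<le> lnN/eta + PE + PG" and b: "PE \<le> PLj + c0/eta" and c: "PG \<le> 2*eta*T + c0"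
    and d: "(1+lam)*PLj = T*(1+lam*alpha)"
  shows "R/T \<le> (1 - cnt/T)/lam + (1+1/lam)*(4*eta + (1/T + s)*c0)"
proof -
  have lnq: "lnN/eta = eta*T" using lnN eta by (simp add: power2_eq_square field_simps)
  have cq: "c0/eta = T*s*c0" using s eta by (simp add: field_simps)
  have "PL \<le> PLj + (4*eta*T + T*s*c0 + c0)" proof -
    have "0 \<le> eta*T" using eta T by simp
    then show ?thesis using a b c lnq cq by linarith
  qed
  then have "(1+lam)*PL \<le> (1+lam)*PLj + (1+lam)*(4*eta*T + T*s*c0 + c0)"
    using lam by (simp add: distrib_left[symmetric] mult_left_mono)
  then have key: "lam*R \<le> T - cnt + (1+lam)*(4*eta*T + T*s*c0 + c0)"
    using e1 d by (simp add: algebra_simps)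
  have X: "(1 - cnt/T)/lam + (1+1/lam)*(4*eta + (1/T + s)*c0)
      = (T - cnt + (1+lam)*(4*eta*T + T*s*c0 + c0)) / (lam*T)"
    using T lam by (simp add: field_simps)
  have "R/T = (lam*R)/(lam*T)" using lam by simp
  also have "\<dots> \<le> (T - cnt + (1+lam)*(4*eta*T + T*s*c0 + c0)) / (lam*T)"
    using key T lam by (intro divide_right_mono) auto
  finally show ?thesis using X by simp
qed

locale mctx =
  fixes N :: nat and lam alpha eta gam :: real and adv :: "real list \<Rightarrow> real \<times> real"
  assumes N2: "N \<ge> 2" and lam0: "0 \<le> lam" and al0: "0 < alpha" and al1: "alpha < 1"
    and eta: "eta = 2*gam" and gpos: "0 < gam"
    and advf: "\<And>hs. 0 \<le> fst (adv hs) \<and> fst (adv hs) < 1"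
    and advc: "\<And>hs. 0 \<le> snd (adv hs) \<and> snd (adv hs) \<le> 1"
begin

definition "Lc h = cumloss_rev N lam alpha eta gam adv (rev h)"
definition "pp h = exaul_p N lam alpha eta gam adv h"
definition "fh h = fst (adv (map (grid N) h))"
definition "ch h = snd (adv (map (grid N) h))"
definition "ellh h k = tot_loss lam alpha (fh h) (ch h) (grid N k)"
definition "PUh h k = (\<Sum>kb\<in>unlocked N (fh h) k. pp h kb)"
definition "esth h k i = est_loss N lam alpha gam (pp h) (fh h) (ch h) k i"
definition "gg h k = 2*gam*ellh h k/(gam + PUh h k)"
definition "Phi h = ln (\<Sum>i<N. exp (- eta * Lc h i))"

lemma pp_eq: "pp h = expw N eta (Lc h)" by (simp add: pp_def exaul_p_def Lc_def)

lemma Lc_snoc: "Lc (h @ [k]) = (\<lambda>i. Lc h i + esth h k i)"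
  by (simp add: Lc_def esth_def pp_def exaul_p_def fh_def ch_def Let_def)

lemma rnd_h: "rnd N (pp h) (fh h) (ch h) lam alpha gam"
  unfolding rnd_def pp_eq
  using N2 expw_pos expw_sum advf advc lam0 al0 al1 gpos by (auto simp: fh_def ch_def)

lemma pm_inst: "pm N pp"
  unfolding pm_def pp_eq using N2 expw_pos expw_sum by (auto intro: less_imp_le)

lemma Phi_step: "k < N \<Longrightarrow> Phi (h @ [k]) \<le> Phi h - eta * ellh h k + eta * gg h k"
  using rnd.R0x[OF rnd_h[of h] pp_eq eta, of k]
  by (simp add: Phi_def Lc_snoc esth_def ellh_def gg_def PUh_def)

lemma Lc_psum: "Lc hs j = psum (\<lambda>h k. esth h k j) hs"
proof (induction hs rule: rev_induct)
  case Nil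
  then show ?case by (simp add: Lc_def)
next
  case (snoc k h)
  then show ?case by (simp add: Lc_snoc psum_snoc)
qed

lemma Phi_tel: "set hs \<subseteq> {..<N} \<Longrightarrow>
   Phi hs \<le> Phi [] + psum (\<lambda>h k. - eta * ellh h k + eta * gg h k) hs"
proof (induction hs rule: rev_induct)
  case Nil
  then show ?case by simp
next
  case (snoc k h)
  then show ?case using Phi_step[of k h] by (simp add: psum_snoc)
qed

lemma Phi_Nil: "Phi [] = ln (real N)"
  by (simp add: Phi_def Lc_def)

lemma Phi_lb: assumes "j < N" shows "- eta * Lc hs j \<le> Phi hs"
proof -
  have pos: "0 < (\<Sum>i<N. exp (- eta * Lc hs i))" using N2 by (intro sum_pos) (auto simp: lessThan_empty_iff)
  have "exp (- eta * Lc hs j) \<le> (\<Sum>i<N. exp (- eta * Lc hs i))"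
    using assms by (intro member_le_sum) auto
  then have "ln (exp (- eta * Lc hs j)) \<le> Phi hs"
    unfolding Phi_def using pos by (subst ln_le_cancel_iff) auto
  then show ?thesis by simp
qed

definition "S1 hs = psum (\<lambda>h k. 2*gam*(esth h k (N-1) - ellh h (N-1))) hs"
definition "S2 hs = psum (\<lambda>h k. gg h k - 4*gam) hs"

lemma S1_mart: "(\<Sum>k<N. pp h k * exp (S1 (h @ [k]) - S1 h)) \<le> 1"
  using rnd.R1x[OF rnd_h[of h], of "N-1"] N2
  by (simp add: S1_def psum_snoc esth_def ellh_def)

lemma S2_mart: "(\<Sum>k<N. pp h k * exp (S2 (h @ [k]) - S2 h)) \<le> 1"
  using rnd.R2x[OF rnd_h[of h]] N2
  by (simp add: S2_def psum_snoc gg_def ellh_def PUh_def)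


lemma psum_const: "psum (\<lambda>h k. c) hs = real (length hs) * c"
  by (simp add: psum_def)

lemma pathwise:
  assumes hs: "set hs \<subseteq> {..<N}" and T: "length hs = T" "T \<ge> 1"
    and lamd: "lam = sqrt T" and etad: "eta = sqrt (ln N / T)" and c0: "0 \<le> c0"
    and S1: "S1 hs \<le> c0" and S2: "S2 hs \<le> c0"
  shows "fdr_regret N alpha adv hs / T \<le> (1 - ineff N adv hs) / sqrt T
     + (1 + 1 / sqrt T) * (4 * sqrt (ln N / T) + (1 / T + sqrt (1 / (T * ln N))) * c0)"
proof -
  define j where "j = N - 1"
  have j: "j < N" using N2 by (simp add: j_def)
  define PL where "PL = psum ellh hs"
  define PE where "PE = psum (\<lambda>h k. esth h k j) hs"
  define PG where "PG = psum gg hs"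
  define PLj where "PLj = psum (\<lambda>h k. ellh h j) hs"
  define cnt where "cnt = (\<Sum>t<length hs. if fst (adv (map (grid N) (take t hs))) < grid N (hs ! t) then 1 else (0::real))"
  have eta0: "eta > 0" using gpos eta by simp
  have Tp: "real T > 0" using T by simp
  have lnN0: "ln (real N) > 0" using N2 by simp
  have "psum (\<lambda>h k. - eta * ellh h k + eta * gg h k) hs = - eta * PL + eta * PG"
    by (simp add: psum_def PL_def PG_def sum.distrib sum_distrib_left sum_negf sum_subtractf)
  then have "- eta * PE \<le> ln (real N) - eta * PL + eta * PG"
    using Phi_lb[OF j, of hs] Phi_tel[OF hs] Phi_Nil by (simp add: Lc_psum PE_def)
  then have "eta * PL \<le> eta * (ln (real N) / eta + PE + PG)"
    using eta0 by (simp add: algebra_simps)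
  then have a: "PL \<le> ln (real N) / eta + PE + PG" using eta0 by simp
  have geta: "2 * gam = eta" using eta by simp
  have "S1 hs = 2 * gam * (PE - PLj)"
    by (simp add: S1_def psum_def PE_def PLj_def j_def right_diff_distrib sum_subtractf sum_distrib_left)
  then have "S1 hs = eta * (PE - PLj)" by (simp only: geta)
  then have "eta * PE \<le> eta * (PLj + c0 / eta)" using S1 eta0 by (simp add: algebra_simps)
  then have b: "PE \<le> PLj + c0 / eta" using eta0 by simp
  have "S2 hs = PG - 2 * (2 * gam) * T"
    by (simp add: S2_def psum_def PG_def sum_subtractf T)
  then have "S2 hs = PG - 2 * eta * T" by (simp only: geta)
  then have c: "PG \<le> 2 * eta * T + c0" using S2 by simp
  have gj: "grid N j = 1" using N2 by (simp add: grid_def j_def)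
  have ej: "ellh h j = (1 + lam * alpha) / (1 + lam)" for h
    using advf[of "map (grid N) h"] gj by (simp add: ellh_def fh_def tot_loss_def abst_loss_def fdr_loss_def)
  have d: "(1 + lam) * PLj = T * (1 + lam * alpha)"
    using lam0 by (simp add: PLj_def ej psum_const T)
  have e1: "(1 + lam) * PL = cnt + lam * fdr_regret N alpha adv hs + lam * alpha * T"
  proof -
    have "(1 + lam) * PL = (\<Sum>t<length hs. (if fst (adv (map (grid N) (take t hs))) < grid N (hs ! t) then 1 else 0)
       + lam * (let fc = adv (map (grid N) (take t hs)); ans = fst fc \<ge> grid N (hs ! t) in
        (if ans then 1 else 0) * snd fc - alpha * (if ans then 1 else 0)) + lam * alpha)"
      unfolding PL_def psum_def sum_distrib_left
      by (rule sum.cong) (use lam0 in \<open>auto simp: ellh_def fh_def ch_def tot_loss_def abst_loss_def fdr_loss_def Let_def field_simps add_nonneg_eq_0_iff\<close>)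
    also have "\<dots> = cnt + lam * fdr_regret N alpha adv hs + lam * alpha * T"
      by (simp add: sum.distrib cnt_def fdr_regret_def sum_distrib_left T)
    finally show ?thesis .
  qed
  have sq: "eta * T * sqrt (1 / (T * ln N)) = 1"
  proof -
    have "eta * sqrt (1 / (T * ln N)) = sqrt (ln N / T * (1 / (T * ln N)))"
      by (simp only: etad real_sqrt_mult)
    also have "ln N / T * (1 / (T * ln N)) = (1 / T)^2" using lnN0 Tp by (simp add: field_simps power2_eq_square)
    also have "sqrt ((1 / T)^2) = 1 / T" using Tp by simp
    finally show ?thesis using Tp by (simp add: field_simps)
  qed
  have lnq: "ln N = eta^2 * T" using lnN0 Tp by (simp add: etad)
  have lam_pos: "lam > 0" using Tp lamd by simp
  have "fdr_regret N alpha adv hs / T \<le> (1 - cnt / T) / lam + (1 + 1 / lam) * (4 * eta + (1 / T + sqrt (1 / (T * ln N))) * c0)"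
    by (rule final_alg[OF Tp lam_pos eta0 sq lnq c0 e1 a b c d])
  moreover have "ineff N adv hs = cnt / T" by (simp add: ineff_def cnt_def T)
  ultimately show ?thesis by (simp add: lamd etad)
qed

end

lemma exaul_prob_Ex:
  "exaul_prob N lam alpha eta gam adv T E = Ex N (exaul_p N lam alpha eta gam adv) T [] (\<lambda>hs. if E hs then 1 else 0)"
  using Ex_eq[where n=T and N=N and P="exaul_p N lam alpha eta gam adv" and h="[]" and F="\<lambda>hs. if E hs then 1 else 0"]
  by (simp add: exaul_prob_def)

theorem theorem1:
  fixes T N :: nat and alpha delta :: real and adv :: "real list \<Rightarrow> real \<times> real"
  assumes "T \<ge> 1"
    and "0 < alpha" "alpha < 1"
    and "0 < delta" "delta < 1"
    and "N \<ge> 2"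
    and "\<And>hs. 0 \<le> fst (adv hs) \<and> fst (adv hs) < 1"
    and "\<And>hs. 0 \<le> snd (adv hs) \<and> snd (adv hs) \<le> 1"
  shows "exaul_prob N (sqrt T) alpha (sqrt (ln N / T)) (sqrt (ln N / T) / 2) adv T
           (\<lambda>hs. fdr_regret N alpha adv hs / T
                 \<le> (1 - ineff N adv hs) / sqrt T
                   + (1 + 1 / sqrt T) * (4 * sqrt (ln N / T)
                      + (1 / T + sqrt (1 / (T * ln N))) * ln (2 / delta)))
         \<ge> 1 - delta"
proof -
  let ?lam = "sqrt (real T)" and ?eta = "sqrt (ln (real N) / real T)"
  let ?gam = "sqrt (ln (real N) / real T) / 2"
  let ?P = "exaul_p N ?lam alpha ?eta ?gam adv"
  have lnpos: "ln (real N) > 0" using assms(6) by simp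
  have Tpos: "real T > 0" using assms(1) by simp
  interpret M: mctx N ?lam alpha ?eta ?gam adv
    by unfold_locales (use assms lnpos Tpos in auto)
  have Peq: "M.pp = ?P" by (rule ext) (simp add: M.pp_def)
  have pmP: "pm N ?P" using M.pm_inst Peq by simp
  define c0 where "c0 = ln (2 / delta)"
  have c0pos: "0 \<le> c0" using assms(4,5) by (simp add: c0_def)
  have ec0: "exp (- c0) = delta / 2" using assms(4) by (simp add: c0_def exp_minus)
  define E where "E = (\<lambda>hs. fdr_regret N alpha adv hs / T
                 \<le> (1 - ineff N adv hs) / sqrt T
                   + (1 + 1 / sqrt T) * (4 * sqrt (ln N / T)
                      + (1 / T + sqrt (1 / (T * ln N))) * ln (2 / delta)))"
  define i1 where "i1 = (\<lambda>hs. if M.S1 hs > c0 then 1 else (0::real))"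
  define i2 where "i2 = (\<lambda>hs. if M.S2 hs > c0 then 1 else (0::real))"
  have m1: "Ex N ?P T [] i1 \<le> delta / 2"
    unfolding i1_def ec0[symmetric]
    by (rule pm.Ex_markov[OF pmP]) (use M.S1_mart Peq in \<open>auto simp: M.S1_def\<close>)
  have m2: "Ex N ?P T [] i2 \<le> delta / 2"
    unfolding i2_def ec0[symmetric]
    by (rule pm.Ex_markov[OF pmP]) (use M.S2_mart Peq in \<open>auto simp: M.S2_def\<close>)
  have "Ex N ?P T [] (\<lambda>hs. (1 - i1 hs) - i2 hs) \<le> Ex N ?P T [] (\<lambda>hs. if E hs then 1 else 0)"
  proof (rule pm.Ex_mono[OF pmP])
    fix hs :: "nat list" assume hs: "set hs \<subseteq> {..<N}" "length hs = length [] + T"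
    show "(1 - i1 hs) - i2 hs \<le> (if E hs then 1 else 0)"
    proof (cases "M.S1 hs \<le> c0 \<and> M.S2 hs \<le> c0")
      case True
      have "E hs" unfolding E_def c0_def[symmetric]
        by (rule M.pathwise[OF hs(1) _ assms(1) refl refl c0pos]) (use hs True in auto)
      then show ?thesis by (simp add: i1_def i2_def)
    next
      case False
      then show ?thesis by (auto simp: i1_def i2_def)
    qed
  qed simp
  moreover have "Ex N ?P T [] (\<lambda>hs. (1 - i1 hs) - i2 hs) = 1 - Ex N ?P T [] i1 - Ex N ?P T [] i2"
    using pm.Ex_diff[OF pmP, of T "[]" "\<lambda>hs. 1 - i1 hs" i2] pm.Ex_diff[OF pmP, of T "[]" "\<lambda>_. 1" i1]
      pm.Ex_const[OF pmP, of T "[]" 1] by simp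
  ultimately have "1 - delta \<le> Ex N ?P T [] (\<lambda>hs. if E hs then 1 else 0)" using m1 m2 by linarith
  then show ?thesis unfolding exaul_prob_Ex E_def .
qed

end
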